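(* Let $G$ be a connected simple graph with maximum degree at most $3$ and minimum degree at least $2$, in which no two adjacent vertices both have degree $3$. Let $M_1,M_2$ be disjoint matchings of $G$ such that $|M_1\cup M_2|$ is maximum over all pairs of disjoint matchings, and, subject to this, such that the graph $G_{M_1,M_2}$ has the minimum number of connected components. Then each connected component of $G_{M_1,M_2}$ is a path $P_2$ or a path $P_3$, and if a component is a $P_3$, then its middle vertex has degree $2$ in $G$.
   Context: $G_{M_1,M_2}$ denotes the subgraph of $G$ induced by the edge set $E(G)\setminus(M_1\cup M_2)$ (its vertices are the endpoints of these edges). $P_k$ denotes a path on $k$ vertices. *)

theory Defs
  imports Main
begin

definition simple_graph :: "'a set \<Rightarrow> 'a set set \<Rightarrow> bool" where
  "simple_graph V E \<longleftrightarrow> finite V \<and>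
     (\<forall>e\<in>E. \<exists>a b. a \<noteq> b \<and> a \<in> V \<and> b \<in> V \<and> e = {a, b})"

definition degree :: "'a set set \<Rightarrow> 'a \<Rightarrow> nat" where
  "degree E v = card {e \<in> E. v \<in> e}"

definition reach :: "'a set set \<Rightarrow> 'a \<Rightarrow> 'a \<Rightarrow> bool" where
  "reach F = (\<lambda>x y. \<exists>e\<in>F. e = {x, y})\<^sup>*\<^sup>*"

definition connected_graph :: "'a set \<Rightarrow> 'a set set \<Rightarrow> bool" where
  "connected_graph V E \<longleftrightarrow> V \<noteq> {} \<and> (\<forall>u\<in>V. \<forall>v\<in>V. reach E u v)"

definition matching :: "'a set set \<Rightarrow> 'a set set \<Rightarrow> bool" where
  "matching E M \<longleftrightarrow> M \<subseteq> E \<and> (\<forall>e\<in>M. \<forall>f\<in>M. e \<noteq> f \<longrightarrow> e \<inter> f = {})"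

text \<open>Edge set of the graph G_{M1,M2}: the subgraph induced by E minus (M1 union M2);
  its vertex set is the union of these edges.\<close>
definition rest_edges :: "'a set set \<Rightarrow> 'a set set \<Rightarrow> 'a set set \<Rightarrow> 'a set set" where
  "rest_edges E M1 M2 = E - (M1 \<union> M2)"

definition components :: "'a set set \<Rightarrow> 'a set set" where
  "components F = (\<lambda>u. {v. reach F u v}) ` (\<Union>F)"

definition comp_edges :: "'a set set \<Rightarrow> 'a set \<Rightarrow> 'a set set" where
  "comp_edges F C = {e \<in> F. e \<subseteq> C}"

definition is_P2 :: "'a set set \<Rightarrow> 'a set \<Rightarrow> bool" where
  "is_P2 F C \<longleftrightarrow> (\<exists>a b. a \<noteq> b \<and> C = {a, b} \<and> comp_edges F C = {{a, b}})"

definition is_P3_mid :: "'a set set \<Rightarrow> 'a set \<Rightarrow> 'a \<Rightarrow> bool" where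
  "is_P3_mid F C b \<longleftrightarrow> (\<exists>a c. a \<noteq> b \<and> b \<noteq> c \<and> a \<noteq> c \<and> C = {a, b, c} \<and>
      comp_edges F C = {{a, b}, {b, c}})"

definition is_P3 :: "'a set set \<Rightarrow> 'a set \<Rightarrow> bool" where
  "is_P3 F C \<longleftrightarrow> (\<exists>b. is_P3_mid F C b)"

end

theory Submission
  imports Defs "HOL-Library.Transitive_Closure_Table"
begin


lemma rtrancl_path_Cons_iff:
  "rtrancl_path r v (y # xs) u \<longleftrightarrow> r v y \<and> rtrancl_path r y xs u"
  by (auto elim: rtrancl_path.cases intro: rtrancl_path.step)

lemma path_prefix:
  assumes "rtrancl_path r v xs u" "rtrancl_path r v ys w"
    "p \<notin> set xs" "p \<notin> set ys" "distinct (v#xs)" "distinct (v#ys)"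
    "\<forall>y z. r v y \<longrightarrow> r v z \<longrightarrow> y \<noteq> p \<longrightarrow> z \<noteq> p \<longrightarrow> y = z"
    "\<forall>v y z s. r v y \<and> r v z \<and> r v s \<longrightarrow> y = z \<or> y = s \<or> z = s"
    "\<forall>x y. r x y \<longrightarrow> r y x"
  shows "(\<exists>zs. ys = xs @ zs) \<or> (\<exists>zs. xs = ys @ zs)"
  using assms
proof (induction xs arbitrary: v ys p)
  case Nil then show ?case by auto
next
  case (Cons y xs')
  note prems = Cons.prems
  note IH = Cons.IH
  show ?case
  proof (cases ys)
    case Nil then show ?thesis by auto
  next
    case (Cons z ys')
    from prems(1) have ry: "r v y" and p1: "rtrancl_path r y xs' u"
      by (auto simp: rtrancl_path_Cons_iff)
    from prems(2) Cons have rz: "r v z" and p2: "rtrancl_path r z ys' w"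
      by (auto simp: rtrancl_path_Cons_iff)
    have yz: "y = z" using prems(3,4,7) ry rz Cons by auto
    have "(\<exists>zs. ys' = xs' @ zs) \<or> (\<exists>zs. xs' = ys' @ zs)"
    proof (rule IH[OF p1, of ys' v])
      show "rtrancl_path r y ys' w" using p2 yz by simp
      show "v \<notin> set xs'" using prems(5) by simp
      show "v \<notin> set ys'" using prems(6) Cons by simp
      show "distinct (y # xs')" using prems(5) by simp
      show "distinct (y # ys')" using prems(6) Cons yz by simp
      show "\<forall>ya z. r y ya \<longrightarrow> r y z \<longrightarrow> ya \<noteq> v \<longrightarrow> z \<noteq> v \<longrightarrow> ya = z"
        using prems(8,9) ry by metis
      show "\<forall>v y z s. r v y \<and> r v z \<and> r v s \<longrightarrow> y = z \<or> y = s \<or> z = s" by fact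
      show "\<forall>x y. r x y \<longrightarrow> r y x" by fact
    qed
    then show ?thesis using Cons yz by auto
  qed
qed

lemma rtrancl_path_last_edge:
  "rtrancl_path r x (xs @ [y]) y' \<Longrightarrow> r (last (x#xs)) y"
proof (induction xs arbitrary: x)
  case Nil then show ?case by (simp add: rtrancl_path_Cons_iff)
next
  case (Cons a xs)
  then have "rtrancl_path r a (xs @ [y]) y'" by (simp add: rtrancl_path_Cons_iff)
  then show ?case using Cons.IH by simp
qed

lemma end_contra:
  assumes p1: "rtrancl_path r b xs a" and p2: "rtrancl_path r b (xs @ zs) c"
    and d: "distinct (b # xs @ zs)"
    and ne: "xs \<noteq> []" and ac: "a \<noteq> c" and ua: "\<forall>y z. r a y \<longrightarrow> r a z \<longrightarrow> y = z"
    and sym: "\<forall>x y. r x y \<longrightarrow> r y x"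
  shows False
proof -
  have la: "last xs = a" using p1 ne rtrancl_path_last by metis
  have "zs \<noteq> []"
  proof
    assume "zs = []"
    then have "last xs = c" using p2 ne rtrancl_path_last by fastforce
    then show False using la ac by simp
  qed
  then obtain z zs' where zs: "zs = z # zs'" by (cases zs) auto
  define xs' where "xs' = butlast xs"
  have xs: "xs = xs' @ [a]" using ne la xs'_def append_butlast_last_id by metis
  have p2': "rtrancl_path r b (xs' @ a # (z # zs')) c" using p2 xs zs by simp
  then obtain q1: "rtrancl_path r b (xs' @ [a]) a" and q2: "rtrancl_path r a (z # zs') c"
    by (rule rtrancl_path_appendE)
  have raz: "r a z" using q2 by (simp add: rtrancl_path_Cons_iff)
  have "r (last (b#xs')) a" using q1 by (rule rtrancl_path_last_edge)
  then have "r a (last (b#xs'))" using sym by blast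
  then have eq: "z = last (b#xs')" using ua raz by blast
  have "last (b#xs') \<in> set (b#xs')" by simp
  moreover have "distinct ((b # xs') @ a # z # zs')" using d xs zs by simp
  ultimately show False using eq by auto
qed

lemma three_ends:
  assumes sym: "\<forall>x y. r x y \<longrightarrow> r y x"
    and deg2: "\<forall>v y z s. r v y \<and> r v z \<and> r v s \<longrightarrow> y = z \<or> y = s \<or> z = s"
    and ua: "\<forall>y z. r a y \<longrightarrow> r a z \<longrightarrow> y = z"
    and ub: "\<forall>y z. r b y \<longrightarrow> r b z \<longrightarrow> y = z"
    and uc: "\<forall>y z. r c y \<longrightarrow> r c z \<longrightarrow> y = z"
    and ra: "r\<^sup>*\<^sup>* b a" and rc: "r\<^sup>*\<^sup>* b c" and "a \<noteq> b" "c \<noteq> b" "a \<noteq> c"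
  shows False
proof -
  obtain xs0 where "rtrancl_path r b xs0 a" using ra rtranclp_eq_rtrancl_path by metis
  then obtain xs where xs: "rtrancl_path r b xs a" "distinct (b#xs)"
    by (rule rtrancl_path_distinct)
  obtain ys0 where "rtrancl_path r b ys0 c" using rc rtranclp_eq_rtrancl_path by metis
  then obtain ys where ys: "rtrancl_path r b ys c" "distinct (b#ys)"
    by (rule rtrancl_path_distinct)
  have xne: "xs \<noteq> []" using xs(1) \<open>a \<noteq> b\<close> by (auto elim: rtrancl_path.cases)
  have yne: "ys \<noteq> []" using ys(1) \<open>c \<noteq> b\<close> by (auto elim: rtrancl_path.cases)
  have "(\<exists>zs. ys = xs @ zs) \<or> (\<exists>zs. xs = ys @ zs)"
    by (rule path_prefix[OF xs(1) ys(1), of b]) (use xs ys ub deg2 sym in auto)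
  then show False
  proof
    assume "\<exists>zs. ys = xs @ zs"
    then obtain zs where "ys = xs @ zs" by blast
    then show False using end_contra[OF xs(1), of zs c] ys xne \<open>a \<noteq> c\<close> ua sym by auto
  next
    assume "\<exists>zs. xs = ys @ zs"
    then obtain zs where "xs = ys @ zs" by blast
    then show False using end_contra[OF ys(1), of zs a] xs yne \<open>a \<noteq> c\<close> uc sym by auto
  qed
qed


lemma finite_E: "simple_graph V E \<Longrightarrow> finite E"
proof -
  assume "simple_graph V E"
  then have "E \<subseteq> Pow V" "finite V" unfolding simple_graph_def by auto
  then show ?thesis by (meson finite_Pow_iff finite_subset)
qed

lemma deg3:
  assumes "finite E" "e1 \<in> E" "e2 \<in> E" "e3 \<in> E" "v \<in> e1" "v \<in> e2" "v \<in> e3"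
    "e1 \<noteq> e2" "e1 \<noteq> e3" "e2 \<noteq> e3"
  shows "3 \<le> degree E v"
proof -
  have "{e1,e2,e3} \<subseteq> {e \<in> E. v \<in> e}" using assms by auto
  moreover have "card {e1,e2,e3} = 3" using assms by simp
  ultimately show ?thesis unfolding degree_def using assms(1)
    by (metis (no_types, lifting) card_mono finite_subset mem_Collect_eq subsetI)
qed

lemma deg4:
  assumes "finite E" "e1 \<in> E" "e2 \<in> E" "e3 \<in> E" "e4 \<in> E" "v \<in> e1" "v \<in> e2" "v \<in> e3" "v \<in> e4"
    "e1 \<noteq> e2" "e1 \<noteq> e3" "e2 \<noteq> e3" "e1 \<noteq> e4" "e2 \<noteq> e4" "e3 \<noteq> e4"
  shows "4 \<le> degree E v"
proof -
  have "{e1,e2,e3,e4} \<subseteq> {e \<in> E. v \<in> e}" using assms by auto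
  moreover have "card {e1,e2,e3,e4} = 4" using assms by simp
  ultimately show ?thesis unfolding degree_def using assms(1)
    by (metis (no_types, lifting) card_mono finite_subset mem_Collect_eq subsetI)
qed

lemma cover:
  assumes fin: "finite E" and M: "matching E M" and M': "matching E M'" and dj: "M \<inter> M' = {}"
   and maxi: "\<forall>N1 N2. matching E N1 \<and> matching E N2 \<and> N1 \<inter> N2 = {} \<longrightarrow> card (N1 \<union> N2) \<le> card (M \<union> M')"
   and e: "{u,w} \<in> E" "{u,w} \<notin> M" "{u,w} \<notin> M'"
  shows "\<exists>f\<in>M. u \<in> f \<or> w \<in> f"
proof (rule ccontr)
  assume nc: "\<not> (\<exists>f\<in>M. u \<in> f \<or> w \<in> f)"
  let ?N = "insert {u,w} M"
  have "matching E ?N" using M nc e unfolding matching_def by auto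
  moreover have "?N \<inter> M' = {}" using dj e by auto
  ultimately have le: "card (?N \<union> M') \<le> card (M \<union> M')" using M' maxi by blast
  have fU: "finite (M \<union> M')" using M M' fin unfolding matching_def by (meson finite_Un finite_subset)
  have "?N \<union> M' = insert {u,w} (M \<union> M')" by auto
  then have "card (?N \<union> M') = Suc (card (M \<union> M'))" using fU e by simp
  then show False using le by simp
qed

lemma reach_step: "{x,y} \<in> F \<Longrightarrow> reach F x y"
  unfolding reach_def by (rule r_into_rtranclp) auto

lemma reach_trans: "reach F x y \<Longrightarrow> reach F y z \<Longrightarrow> reach F x z"
  unfolding reach_def by (rule rtranclp_trans)

lemma reach_refl: "reach F x x"
  unfolding reach_def by simp

lemma reach_closed:
  assumes "\<forall>y z. y \<in> K \<longrightarrow> {y,z} \<in> F \<longrightarrow> z \<in> K" "u \<in> K" "reach F u v"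
  shows "v \<in> K"
  using assms(3) unfolding reach_def
proof (induction rule: rtranclp_induct)
  case base then show ?case using assms(2) .
next
  case (step y z) then show ?case using assms(1) by auto
qed

lemma edge_reach:
  assumes "g \<in> F" "\<exists>s t. g = {s,t}" "y \<in> g" "y' \<in> g" "reach F b y'"
  shows "reach F b y"
proof (cases "y = y'")
  case True then show ?thesis using assms by simp
next
  case False
  then have "g = {y', y}" using assms(2,3,4) by auto
  then have "reach F y' y" using assms(1) reach_step by metis
  then show ?thesis using assms(5) reach_trans by metis
qed

lemma swap_contra:
  assumes fin: "finite E" and M1: "matching E M1" and M2: "matching E M2" and dj: "M1 \<inter> M2 = {}"
   and maxi: "\<forall>N1 N2. matching E N1 \<and> matching E N2 \<and> N1 \<inter> N2 = {} \<longrightarrow> card (N1 \<union> N2) \<le> card (M1 \<union> M2)"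
   and e: "{t,b} \<in> E" "{t,b} \<notin> M1 \<union> M2"
   and bM: "\<forall>g\<in>M1 \<union> M2. b \<in> g \<longrightarrow> g \<in> M1"
   and tM: "\<forall>g\<in>M1 \<union> M2. t \<in> g \<longrightarrow> g \<in> M2"
   and edges2: "\<forall>g\<in>E. \<exists>s u. g = {s,u}"
   and nr: "\<not> reach (M1 \<union> M2) b t"
  shows False
proof -
  define D where "D = M1 \<union> M2"
  define S where "S = {e \<in> D. \<exists>y\<in>e. reach D b y}"
  define N1 where "N1 = (M1 - S) \<union> (M2 \<inter> S)"
  define N2 where "N2 = (M2 - S) \<union> (M1 \<inter> S)"
  have DE: "D \<subseteq> E" using M1 M2 unfolding D_def matching_def by auto
  have e2: "\<And>g. g \<in> D \<Longrightarrow> \<exists>s u. g = {s,u}" using DE edges2 by auto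
  have inS: "\<And>g y. g \<in> S \<Longrightarrow> y \<in> g \<Longrightarrow> reach D b y"
  proof -
    fix g y assume "g \<in> S" "y \<in> g"
    then obtain y' where "g \<in> D" "y' \<in> g" "reach D b y'" unfolding S_def by auto
    then show "reach D b y" using edge_reach[OF \<open>g \<in> D\<close> e2[OF \<open>g \<in> D\<close>] \<open>y \<in> g\<close>] by blast
  qed
  have m1: "\<And>e f. e \<in> M1 \<Longrightarrow> f \<in> M1 \<Longrightarrow> e \<noteq> f \<Longrightarrow> e \<inter> f = {}" using M1 unfolding matching_def by auto
  have m2: "\<And>e f. e \<in> M2 \<Longrightarrow> f \<in> M2 \<Longrightarrow> e \<noteq> f \<Longrightarrow> e \<inter> f = {}" using M2 unfolding matching_def by auto
  have cross: "\<And>e f. e \<in> D \<Longrightarrow> e \<notin> S \<Longrightarrow> f \<in> S \<Longrightarrow> e \<inter> f = {}"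
  proof (rule ccontr)
    fix e f assume "e \<in> D" "e \<notin> S" "f \<in> S" "e \<inter> f \<noteq> {}"
    then obtain y where "y \<in> e" "y \<in> f" by auto
    then have "reach D b y" using inS \<open>f \<in> S\<close> by blast
    then have "e \<in> S" using \<open>e \<in> D\<close> \<open>y \<in> e\<close> unfolding S_def by auto
    then show False using \<open>e \<notin> S\<close> by simp
  qed
  have N1m: "matching E N1"
    unfolding matching_def
  proof (intro conjI ballI impI)
    show "N1 \<subseteq> E" using DE unfolding N1_def D_def by auto
  next
    fix e f assume "e \<in> N1" "f \<in> N1" "e \<noteq> f"
    have ce: "(e \<in> M1 \<and> e \<notin> S) \<or> (e \<in> M2 \<and> e \<in> S)" using \<open>e \<in> N1\<close> unfolding N1_def by auto
    have cf: "(f \<in> M1 \<and> f \<notin> S) \<or> (f \<in> M2 \<and> f \<in> S)" using \<open>f \<in> N1\<close> unfolding N1_def by auto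
    have eD: "e \<in> D" "f \<in> D" using ce cf unfolding D_def by auto
    show "e \<inter> f = {}" using ce cf
    proof (elim disjE conjE)
      assume "e \<in> M1" "f \<in> M1" then show ?thesis using m1 m2 \<open>e \<noteq> f\<close> by blast
    next
      assume "e \<in> M2" "f \<in> M2" then show ?thesis using m1 m2 \<open>e \<noteq> f\<close> by blast
    next
      assume "e \<notin> S" "f \<in> S" then show ?thesis using cross[of e f] eD by simp
    next
      assume "e \<in> S" "f \<notin> S" then show ?thesis using cross[of f e] eD by (simp add: Int_commute)
    qed
  qed
  have N2m: "matching E N2"
    unfolding matching_def
  proof (intro conjI ballI impI)
    show "N2 \<subseteq> E" using DE unfolding N2_def D_def by auto
  next
    fix e f assume "e \<in> N2" "f \<in> N2" "e \<noteq> f"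
    have ce: "(e \<in> M2 \<and> e \<notin> S) \<or> (e \<in> M1 \<and> e \<in> S)" using \<open>e \<in> N2\<close> unfolding N2_def by auto
    have cf: "(f \<in> M2 \<and> f \<notin> S) \<or> (f \<in> M1 \<and> f \<in> S)" using \<open>f \<in> N2\<close> unfolding N2_def by auto
    have eD: "e \<in> D" "f \<in> D" using ce cf unfolding D_def by auto
    show "e \<inter> f = {}" using ce cf
    proof (elim disjE conjE)
      assume "e \<in> M2" "f \<in> M2" then show ?thesis using m1 m2 \<open>e \<noteq> f\<close> by blast
    next
      assume "e \<in> M1" "f \<in> M1" then show ?thesis using m1 m2 \<open>e \<noteq> f\<close> by blast
    next
      assume "e \<notin> S" "f \<in> S" then show ?thesis using cross[of e f] eD by simp
    next
      assume "e \<in> S" "f \<notin> S" then show ?thesis using cross[of f e] eD by (simp add: Int_commute)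
    qed
  qed
  have ntb: "\<And>g. g \<in> N1 \<Longrightarrow> g \<inter> {t,b} = {}"
  proof (rule ccontr)
    fix g assume g: "g \<in> N1" "g \<inter> {t,b} \<noteq> {}"
    have gD: "g \<in> D" using g unfolding N1_def D_def by auto
    show False
    proof (cases "t \<in> g")
      case True
      then have "g \<in> M2" using tM gD unfolding D_def by auto
      then have "g \<in> S" using g dj unfolding N1_def by auto
      then have "reach D b t" using inS True by blast
      then show False using nr unfolding D_def by simp
    next
      case False
      then have "b \<in> g" using g by auto
      then have "g \<in> M1" using bM gD unfolding D_def by auto
      moreover have "g \<in> S"
      proof -
        have "reach D b b" by (rule reach_refl)
        then show ?thesis using gD \<open>b \<in> g\<close> unfolding S_def by auto
      qed
      ultimately have "g \<in> M1 \<inter> M2" using g(1) unfolding N1_def by auto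
      then show False using dj by simp
    qed
  qed
  have N1'm: "matching E (insert {t,b} N1)"
    unfolding matching_def
  proof (intro conjI ballI impI)
    show "insert {t,b} N1 \<subseteq> E" using N1m e unfolding matching_def by auto
  next
    fix x y assume xy: "x \<in> insert {t,b} N1" "y \<in> insert {t,b} N1" "x \<noteq> y"
    show "x \<inter> y = {}"
    proof (cases "x = {t,b}")
      case True
      then have "y \<in> N1" using xy by auto
      then show ?thesis using ntb[of y] True by (simp add: Int_commute)
    next
      case False
      then have x: "x \<in> N1" using xy by auto
      show ?thesis
      proof (cases "y = {t,b}")
        case True then show ?thesis using ntb[OF x] by simp
      next
        case False
        then have "y \<in> N1" using xy by auto
        then show ?thesis using x xy(3) N1m unfolding matching_def by blast
      qed
    qed
  qed
  have dj': "insert {t,b} N1 \<inter> N2 = {}" using dj e unfolding N1_def N2_def D_def by auto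
  have le: "card (insert {t,b} N1 \<union> N2) \<le> card (M1 \<union> M2)" using maxi N1'm N2m dj' by blast
  have U: "insert {t,b} N1 \<union> N2 = insert {t,b} (M1 \<union> M2)" unfolding N1_def N2_def by auto
  have fU: "finite (M1 \<union> M2)" using DE fin unfolding D_def by (meson finite_subset)
  have "card (insert {t,b} N1 \<union> N2) = Suc (card (M1 \<union> M2))" using U fU e by simp
  then show False using le by simp
qed

lemma comp_P2:
  assumes "{u,w} \<in> F" "u \<noteq> w" "\<forall>z. {u,z} \<in> F \<longrightarrow> z = w" "\<forall>z. {w,z} \<in> F \<longrightarrow> z = u"
    and F2: "\<forall>e\<in>F. \<exists>s t. s \<noteq> t \<and> e = {s,t}"
  shows "is_P2 F {v. reach F u v}"
proof -
  have "{v. reach F u v} \<subseteq> {u,w}"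
  proof
    fix v assume "v \<in> {v. reach F u v}"
    then show "v \<in> {u,w}" using reach_closed[of "{u,w}" F u v] assms(3,4) by auto
  qed
  moreover have "{u,w} \<subseteq> {v. reach F u v}" using reach_refl reach_step assms(1) by auto
  ultimately have C: "{v. reach F u v} = {u,w}" by blast
  have "comp_edges F {u,w} = {{u,w}}"
  proof
    show "comp_edges F {u,w} \<subseteq> {{u,w}}"
    proof
      fix g assume "g \<in> comp_edges F {u,w}"
      then have g: "g \<in> F" "g \<subseteq> {u,w}" unfolding comp_edges_def by auto
      then obtain s t where st: "s \<noteq> t" "g = {s,t}" using F2 by blast
      then have "g = {u,w} \<or> g = {w,u}" using g by blast
      then show "g \<in> {{u,w}}" by (auto simp: insert_commute)
    qed
    show "{{u,w}} \<subseteq> comp_edges F {u,w}" unfolding comp_edges_def using assms(1) by auto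
  qed
  then show ?thesis unfolding is_P2_def using C assms(2)
    by (intro exI[of _ u] exI[of _ w]) simp
qed

lemma comp_P3:
  assumes e: "{m,p} \<in> F" "{m,q} \<in> F" and d: "p \<noteq> q" "m \<noteq> p" "m \<noteq> q"
    and nm: "\<forall>z. {m,z} \<in> F \<longrightarrow> z = p \<or> z = q"
    and np: "\<forall>z. {p,z} \<in> F \<longrightarrow> z = m" and nq: "\<forall>z. {q,z} \<in> F \<longrightarrow> z = m"
    and F2: "\<forall>e\<in>F. \<exists>s t. s \<noteq> t \<and> e = {s,t}" and u: "u \<in> {p,m,q}"
  shows "is_P3_mid F {v. reach F u v} m"
proof -
  have "{v. reach F u v} \<subseteq> {p,m,q}"
  proof
    fix v assume "v \<in> {v. reach F u v}"
    then show "v \<in> {p,m,q}" using reach_closed[of "{p,m,q}" F u v] nm np nq u by auto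
  qed
  moreover have "{p,m,q} \<subseteq> {v. reach F u v}"
  proof -
    have mp: "reach F m p" "reach F m q" using e by (simp_all add: reach_step)
    have pm: "reach F p m" "reach F q m" using e reach_step insert_commute by metis+
    have "reach F u m" using u pm reach_refl by auto
    then show ?thesis using mp reach_trans by auto
  qed
  ultimately have C: "{v. reach F u v} = {p,m,q}" by blast
  have "comp_edges F {p,m,q} = {{p,m},{m,q}}"
  proof
    show "comp_edges F {p,m,q} \<subseteq> {{p,m},{m,q}}"
    proof
      fix g assume "g \<in> comp_edges F {p,m,q}"
      then have g: "g \<in> F" "g \<subseteq> {p,m,q}" unfolding comp_edges_def by auto
      then obtain s t where st: "s \<noteq> t" "g = {s,t}" using F2 by blast
      have pm: "{p,m} = {m,p}" "{q,m} = {m,q}" by (simp_all add: insert_commute)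
      have "s = m \<or> s = p \<or> s = q" using g st by auto
      then have "g = {p,m} \<or> g = {m,q}"
      proof (elim disjE)
        assume "s = m" then have "{m,t} \<in> F" using g st by simp
        then have "t = p \<or> t = q" using nm by blast
        then show ?thesis using st \<open>s = m\<close> pm by auto
      next
        assume "s = p" then have "{p,t} \<in> F" using g st by simp
        then have "t = m" using np by blast
        then show ?thesis using st \<open>s = p\<close> pm by auto
      next
        assume "s = q" then have "{q,t} \<in> F" using g st by simp
        then have "t = m" using nq by blast
        then show ?thesis using st \<open>s = q\<close> pm by auto
      qed
      then show "g \<in> {{p,m},{m,q}}" by simp
    qed
    have pm: "{p,m} = {m,p}" by (simp add: insert_commute)
    show "{{p,m},{m,q}} \<subseteq> comp_edges F {p,m,q}" unfolding comp_edges_def using e pm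
      by auto
  qed
  then show ?thesis unfolding is_P3_mid_def using C d
    by (intro exI[of _ p] exI[of _ q]) simp
qed



theorem lemma1:
  fixes V :: "'a set" and E M1 M2 :: "'a set set"
  assumes G: "simple_graph V E"
    and conn: "connected_graph V E"
    and deg: "\<forall>v\<in>V. 2 \<le> degree E v \<and> degree E v \<le> 3"
    and no33: "\<forall>u v. {u, v} \<in> E \<longrightarrow> \<not> (degree E u = 3 \<and> degree E v = 3)"
    and M1: "matching E M1" and M2: "matching E M2" and disj: "M1 \<inter> M2 = {}"
    and maxi: "\<forall>N1 N2. matching E N1 \<and> matching E N2 \<and> N1 \<inter> N2 = {} \<longrightarrow>
                 card (N1 \<union> N2) \<le> card (M1 \<union> M2)"
    and mini: "\<forall>N1 N2. matching E N1 \<and> matching E N2 \<and> N1 \<inter> N2 = {} \<and>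
                 card (N1 \<union> N2) = card (M1 \<union> M2) \<longrightarrow>
                 card (components (rest_edges E M1 M2)) \<le> card (components (rest_edges E N1 N2))"
  shows "(\<forall>C\<in>components (rest_edges E M1 M2).
            is_P2 (rest_edges E M1 M2) C \<or> is_P3 (rest_edges E M1 M2) C) \<and>
         (\<forall>C\<in>components (rest_edges E M1 M2). \<forall>b.
            is_P3_mid (rest_edges E M1 M2) C b \<longrightarrow> degree E b = 2)"
proof -
  define H where "H = rest_edges E M1 M2"
  define D where "D = M1 \<union> M2"
  have fin: "finite E" using G by (rule finite_E)
  have HD: "H = E - D" unfolding H_def D_def rest_edges_def by simp
  have edgeE: "\<And>e. e \<in> E \<Longrightarrow> \<exists>s t. s \<noteq> t \<and> s \<in> V \<and> t \<in> V \<and> e = {s,t}"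
    using G unfolding simple_graph_def by blast
  have inV: "\<And>e v. e \<in> E \<Longrightarrow> v \<in> e \<Longrightarrow> v \<in> V" using edgeE by blast
  have dle: "\<And>e v. e \<in> E \<Longrightarrow> v \<in> e \<Longrightarrow> 2 \<le> degree E v \<and> degree E v \<le> 3"
    using inV deg by blast
  have edge_ne: "\<And>x y. {x,y} \<in> E \<Longrightarrow> x \<noteq> y"
  proof -
    fix x y assume "{x,y} \<in> E"
    then obtain s t where "s \<noteq> t" "{x,y} = {s,t}" using edgeE by blast
    then show "x \<noteq> y" by (auto simp: doubleton_eq_iff)
  qed
  have M1E: "M1 \<subseteq> E" and M2E: "M2 \<subseteq> E" using M1 M2 unfolding matching_def by auto
  have maxi2: "\<forall>N1 N2. matching E N1 \<and> matching E N2 \<and> N1 \<inter> N2 = {} \<longrightarrow>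
                 card (N1 \<union> N2) \<le> card (M2 \<union> M1)" using maxi by (simp add: Un_commute)
  have disj2: "M2 \<inter> M1 = {}" using disj by blast
  have cov1: "\<And>u w. {u,w} \<in> H \<Longrightarrow> \<exists>f\<in>M1. u \<in> f \<or> w \<in> f"
    using cover[OF fin M1 M2 disj maxi] unfolding HD D_def by blast
  have cov2: "\<And>u w. {u,w} \<in> H \<Longrightarrow> \<exists>f\<in>M2. u \<in> f \<or> w \<in> f"
    using cover[OF fin M2 M1 disj2 maxi2] unfolding HD D_def by blast
  have HE: "H \<subseteq> E" unfolding HD by auto
  have d3: "\<And>v e1 e2 e3. e1 \<in> E \<Longrightarrow> e2 \<in> E \<Longrightarrow> e3 \<in> E \<Longrightarrow> v \<in> e1 \<Longrightarrow> v \<in> e2 \<Longrightarrow> v \<in> e3 \<Longrightarrow>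
      e1 \<noteq> e2 \<Longrightarrow> e1 \<noteq> e3 \<Longrightarrow> e2 \<noteq> e3 \<Longrightarrow> 3 \<le> degree E v"
    using deg3[OF fin] by blast
  have d4: "\<And>v e1 e2 e3 e4. e1 \<in> E \<Longrightarrow> e2 \<in> E \<Longrightarrow> e3 \<in> E \<Longrightarrow> e4 \<in> E \<Longrightarrow> v \<in> e1 \<Longrightarrow> v \<in> e2 \<Longrightarrow> v \<in> e3 \<Longrightarrow> v \<in> e4 \<Longrightarrow>
      e1 \<noteq> e2 \<Longrightarrow> e1 \<noteq> e3 \<Longrightarrow> e2 \<noteq> e3 \<Longrightarrow> e1 \<noteq> e4 \<Longrightarrow> e2 \<noteq> e4 \<Longrightarrow> e3 \<noteq> e4 \<Longrightarrow> False"
  proof -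
    fix v e1 e2 e3 e4
    assume a: "e1 \<in> E" "e2 \<in> E" "e3 \<in> E" "e4 \<in> E" "v \<in> e1" "v \<in> e2" "v \<in> e3" "v \<in> e4"
      "e1 \<noteq> e2" "e1 \<noteq> e3" "e2 \<noteq> e3" "e1 \<noteq> e4" "e2 \<noteq> e4" "e3 \<noteq> e4"
    have "4 \<le> degree E v" using deg4[OF fin a] .
    moreover have "degree E v \<le> 3" using dle a(1,5) by blast
    ultimately show False by simp
  qed
  have dneq: "\<And>u x y. {u,x} = {u,y} \<Longrightarrow> x = y" by (auto simp: doubleton_eq_iff)
  have three: "\<And>u v. {u,v} \<in> E \<Longrightarrow> 3 \<le> degree E u \<Longrightarrow> 3 \<le> degree E v \<Longrightarrow> False"
  proof -
    fix u v assume a: "{u,v} \<in> E" "3 \<le> degree E u" "3 \<le> degree E v"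
    have "degree E u \<le> 3" using dle[OF a(1), of u] by simp
    moreover have "degree E v \<le> 3" using dle[OF a(1), of v] by simp
    ultimately have "degree E u = 3 \<and> degree E v = 3" using a(2,3) by linarith
    then show False using no33 a(1) by blast
  qed
  have H3: "\<And>v p q s. {v,p} \<in> H \<Longrightarrow> {v,q} \<in> H \<Longrightarrow> {v,s} \<in> H \<Longrightarrow> p \<noteq> q \<Longrightarrow> p \<noteq> s \<Longrightarrow> q \<noteq> s \<Longrightarrow> False"
  proof -
    fix v p q s assume a: "{v,p} \<in> H" "{v,q} \<in> H" "{v,s} \<in> H" "p \<noteq> q" "p \<noteq> s" "q \<noteq> s"
    have E3: "{v,p} \<in> E" "{v,q} \<in> E" "{v,s} \<in> E" using a HE by auto
    have n: "{v,p} \<noteq> {v,q}" "{v,p} \<noteq> {v,s}" "{v,q} \<noteq> {v,s}" using a(4-6) by (auto simp: doubleton_eq_iff)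
    have nc: "\<And>f. f \<in> D \<Longrightarrow> v \<in> f \<Longrightarrow> False"
    proof -
      fix f assume "f \<in> D" "v \<in> f"
      moreover have "f \<notin> H" using \<open>f \<in> D\<close> unfolding HD by auto
      moreover have "f \<in> E" using \<open>f \<in> D\<close> M1E M2E unfolding D_def by auto
      ultimately have "f \<noteq> {v,p}" "f \<noteq> {v,q}" "f \<noteq> {v,s}" using a(1-3) by auto
      then show False using d4[of "{v,p}" "{v,q}" "{v,s}" f v] E3 n \<open>f \<in> E\<close> \<open>v \<in> f\<close>
        by simp
    qed
    obtain f1 where f1: "f1 \<in> M1" "v \<in> f1 \<or> p \<in> f1" using cov1 a(1) by blast
    obtain f2 where f2: "f2 \<in> M2" "v \<in> f2 \<or> p \<in> f2" using cov2 a(1) by blast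
    have pf: "p \<in> f1" "p \<in> f2" using f1 f2 nc unfolding D_def by auto
    have "f1 \<noteq> f2" using f1 f2 disj by auto
    moreover have "f1 \<noteq> {v,p}" "f2 \<noteq> {v,p}" using f1 f2 a(1) unfolding HD D_def by auto
    ultimately have "3 \<le> degree E p" using d3[of f1 f2 "{v,p}" p] f1 f2 M1E M2E E3 pf by auto
    moreover have "3 \<le> degree E v" using d3[of "{v,p}" "{v,q}" "{v,s}" v] E3 n by auto
    moreover have "{p,v} \<in> E" using E3 by (simp add: insert_commute)
    ultimately show False using three by blast
  qed
  have H22: "\<And>u w p q. {u,w} \<in> H \<Longrightarrow> {u,p} \<in> H \<Longrightarrow> p \<noteq> w \<Longrightarrow> {w,q} \<in> H \<Longrightarrow> q \<noteq> u \<Longrightarrow> False"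
  proof -
    fix u w p q assume a: "{u,w} \<in> H" "{u,p} \<in> H" "p \<noteq> w" "{w,q} \<in> H" "q \<noteq> u"
    have E3: "{u,w} \<in> E" "{u,p} \<in> E" "{w,q} \<in> E" using a HE by auto
    have uw: "u \<noteq> w" using E3 edge_ne by blast
    have n1: "{u,w} \<noteq> {u,p}" using a(3) by (auto simp: doubleton_eq_iff)
    have n2: "{u,w} \<noteq> {w,q}" using a(5) uw by (auto simp: doubleton_eq_iff)
    obtain f1 where f1: "f1 \<in> M1" "u \<in> f1 \<or> w \<in> f1" using cov1 a(1) by blast
    obtain f2 where f2: "f2 \<in> M2" "u \<in> f2 \<or> w \<in> f2" using cov2 a(1) by blast
    have fH: "f1 \<notin> H" "f2 \<notin> H" using f1 f2 unfolding HD D_def by auto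
    have fE: "f1 \<in> E" "f2 \<in> E" using f1 f2 M1E M2E by auto
    have f12: "f1 \<noteq> f2" using f1 f2 disj by auto
    have du: "\<And>f. f \<in> E \<Longrightarrow> f \<notin> H \<Longrightarrow> u \<in> f \<Longrightarrow> 3 \<le> degree E u"
    proof -
      fix f assume f: "f \<in> E" "f \<notin> H" "u \<in> f"
      then have "f \<noteq> {u,w}" "f \<noteq> {u,p}" using a(1,2) by auto
      then show "3 \<le> degree E u" using d3[of f "{u,w}" "{u,p}" u] f E3 n1 by simp
    qed
    have dw: "\<And>f. f \<in> E \<Longrightarrow> f \<notin> H \<Longrightarrow> w \<in> f \<Longrightarrow> 3 \<le> degree E w"
    proof -
      fix f assume "f \<in> E" "f \<notin> H" "w \<in> f"
      have "{w,u} \<in> E" using E3 by (simp add: insert_commute)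
      moreover have "{w,u} \<noteq> {w,q}" using a(5) by (auto simp: doubleton_eq_iff)
      moreover have "{w,u} \<in> H" using a(1) by (simp add: insert_commute)
      moreover have "f \<noteq> {w,u}" "f \<noteq> {w,q}" using a(4) \<open>f \<notin> H\<close> \<open>{w,u} \<in> H\<close> by auto
      ultimately show "3 \<le> degree E w" using d3[of f "{w,u}" "{w,q}" w] \<open>f \<in> E\<close> \<open>w \<in> f\<close> E3
        by simp
    qed
    have fn: "f1 \<noteq> {u,w}" "f1 \<noteq> {u,p}" "f2 \<noteq> {u,w}" "f2 \<noteq> {u,p}" "f1 \<noteq> {w,q}" "f2 \<noteq> {w,q}"
      using fH a(1,2,4) by auto
    have uu: "\<not> (u \<in> f1 \<and> u \<in> f2)"
    proof
      assume "u \<in> f1 \<and> u \<in> f2"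
      then show False using d4[of f1 f2 "{u,w}" "{u,p}" u] fE E3 f12 fn n1 by simp
    qed
    have ww: "\<not> (w \<in> f1 \<and> w \<in> f2)"
    proof
      assume "w \<in> f1 \<and> w \<in> f2"
      then show False using d4[of f1 f2 "{u,w}" "{w,q}" w] fE E3 f12 fn n2 by simp
    qed
    have "3 \<le> degree E u \<and> 3 \<le> degree E w"
    proof (cases "u \<in> f1")
      case True
      then have "w \<in> f2" using uu f2(2) by blast
      then show ?thesis using du[OF fE(1) fH(1) True] dw[OF fE(2) fH(2)] by simp
    next
      case False
      then have "w \<in> f1" "u \<in> f2" using f1(2) ww f2(2) by blast+
      then show ?thesis using du[OF fE(2) fH(2)] dw[OF fE(1) fH(1)] by simp
    qed
    then show False using three E3(1) by blast
  qed
  have F2: "\<forall>e\<in>H. \<exists>s t. s \<noteq> t \<and> e = {s,t}" using HE edgeE by blast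
  have part1: "\<forall>C\<in>components H. is_P2 H C \<or> is_P3 H C"
  proof
    fix C assume "C \<in> components H"
    then obtain u where u: "u \<in> \<Union>H" and C: "C = {v. reach H u v}" unfolding components_def by auto
    then obtain e where eH: "e \<in> H" and ue: "u \<in> e" by auto
    obtain s t where st: "s \<noteq> t" "e = {s,t}" using F2 eH by blast
    obtain w where uwH: "{u,w} \<in> H" and uw: "u \<noteq> w"
    proof (cases "u = s")
      case True then show ?thesis using that[of t] st eH by simp
    next
      case False
      then have "u = t" using ue st by auto
      moreover have "{t,s} = {s,t}" by (rule insert_commute)
      ultimately show ?thesis using that[of s] st eH by simp
    qed
    show "is_P2 H C \<or> is_P3 H C"
    proof (cases "\<exists>p. {u,p} \<in> H \<and> p \<noteq> w")
      case True
      then obtain p where p: "{u,p} \<in> H" "p \<noteq> w" by blast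
      have up: "u \<noteq> p" using p(1) HE edge_ne by blast
      have nw: "\<forall>z. {w,z} \<in> H \<longrightarrow> z = u" using H22[OF uwH p(1) p(2)] by blast
      have np: "\<forall>z. {p,z} \<in> H \<longrightarrow> z = u" using H22[OF p(1) uwH p(2)[symmetric]] by blast
      have nu: "\<forall>z. {u,z} \<in> H \<longrightarrow> z = w \<or> z = p" using H3[OF uwH p(1)] p(2) by blast
      have "is_P3_mid H {v. reach H u v} u"
        by (rule comp_P3[OF uwH p(1) p(2)[symmetric] uw up nu nw np F2]) simp
      then show ?thesis unfolding is_P3_def C by blast
    next
      case nT: False
      show ?thesis
      proof (cases "\<exists>q. {w,q} \<in> H \<and> q \<noteq> u")
        case True
        then obtain q where q: "{w,q} \<in> H" "q \<noteq> u" by blast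
        have wuH: "{w,u} \<in> H" using uwH by (simp add: insert_commute)
        have wq: "w \<noteq> q" using q(1) HE edge_ne by blast
        have nu: "\<forall>z. {u,z} \<in> H \<longrightarrow> z = w" using H22[OF wuH q(1) q(2)] by blast
        have nq: "\<forall>z. {q,z} \<in> H \<longrightarrow> z = w" using H22[OF q(1) wuH q(2)[symmetric]] by blast
        have nw: "\<forall>z. {w,z} \<in> H \<longrightarrow> z = u \<or> z = q" using H3[OF wuH q(1)] q(2) by blast
        have "is_P3_mid H {v. reach H u v} w"
          by (rule comp_P3[OF wuH q(1) q(2)[symmetric] uw[symmetric] wq nw nu nq F2]) simp
        then show ?thesis unfolding is_P3_def C by blast
      next
        case False
        have nu: "\<forall>z. {u,z} \<in> H \<longrightarrow> z = w" using nT by blast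
        have nw: "\<forall>z. {w,z} \<in> H \<longrightarrow> z = u" using False by blast
        have "is_P2 H {v. reach H u v}" by (rule comp_P2[OF uwH uw nu nw F2])
        then show ?thesis unfolding C by blast
      qed
    qed
  qed
  have part2: "\<forall>C\<in>components H. \<forall>b. is_P3_mid H C b \<longrightarrow> degree E b = 2"
  proof (intro ballI allI impI)
    fix C b assume CH: "C \<in> components H" and P3: "is_P3_mid H C b"
    then obtain u where C: "C = {v. reach H u v}" unfolding components_def by auto
    obtain a c where ac: "a \<noteq> b" "b \<noteq> c" "a \<noteq> c" "C = {a,b,c}" "comp_edges H C = {{a,b},{b,c}}"
      using P3 unfolding is_P3_mid_def by blast
    have "{a,b} \<in> comp_edges H C" "{b,c} \<in> comp_edges H C" using ac(5) by simp_all
    then have abH: "{a,b} \<in> H" "{b,c} \<in> H" unfolding comp_edges_def by auto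
    have nb: "\<And>z. {b,z} \<in> H \<Longrightarrow> z = a \<or> z = c"
    proof -
      fix z assume bz: "{b,z} \<in> H"
      have "b \<in> C" using ac(4) by simp
      then have "reach H u b" using C by simp
      then have "reach H u z" using reach_trans[OF _ reach_step[OF bz]] by blast
      then have zC: "z \<in> C" using C by simp
      have "{b,z} \<subseteq> C" using zC \<open>b \<in> C\<close> by simp
      then have "{b,z} \<in> comp_edges H C" unfolding comp_edges_def using bz by simp
      then have "{b,z} = {a,b} \<or> {b,z} = {b,c}" using ac(5) by simp
      then show "z = a \<or> z = c" by (auto simp: doubleton_eq_iff)
    qed
    show "degree E b = 2"
    proof (rule ccontr)
      assume nd: "degree E b \<noteq> 2"
      have abE: "{a,b} \<in> E" "{b,c} \<in> E" using abH HE by auto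
      have db: "degree E b = 3" using dle[OF abE(1), of b] nd by simp
      have "\<exists>f\<in>E. b \<in> f \<and> f \<noteq> {a,b} \<and> f \<noteq> {b,c}"
      proof (rule ccontr)
        assume "\<not> (\<exists>f\<in>E. b \<in> f \<and> f \<noteq> {a,b} \<and> f \<noteq> {b,c})"
        then have "{e\<in>E. b\<in>e} \<subseteq> {{a,b},{b,c}}" by auto
        then have "card {e\<in>E. b\<in>e} \<le> card {{a,b},{b,c}}" by (rule card_mono[rotated]) simp
        also have "\<dots> \<le> 2" by (cases "{a,b} = {b,c}") auto
        finally show False using db unfolding degree_def by simp
      qed
      then obtain f where f: "f \<in> E" "b \<in> f" "f \<noteq> {a,b}" "f \<noteq> {b,c}" by blast
      have abbc: "{a,b} \<noteq> {b,c}" using ac by (auto simp: doubleton_eq_iff)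
      have allb: "\<And>g. g \<in> E \<Longrightarrow> b \<in> g \<Longrightarrow> g = {a,b} \<or> g = {b,c} \<or> g = f"
      proof (rule ccontr)
        fix g assume g: "g \<in> E" "b \<in> g" "\<not> (g = {a,b} \<or> g = {b,c} \<or> g = f)"
        then show False using d4[of "{a,b}" "{b,c}" f g b] abE f abbc by auto
      qed
      have fnH: "f \<notin> H"
      proof
        assume fH: "f \<in> H"
        obtain s t where st: "s \<noteq> t" "f = {s,t}" using F2 fH by blast
        obtain z where fz: "f = {b,z}"
        proof (cases "b = s")
          case True then show ?thesis using that[of t] st by simp
        next
          case False
          then have "b = t" using f(2) st by auto
          moreover have "{t,s} = {s,t}" by (rule insert_commute)
          ultimately show ?thesis using that[of s] st by simp
        qed
        then have "z = a \<or> z = c" using nb fH by simp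
        then show False using f(3,4) fz by (auto simp: insert_commute)
      qed
      then have fD: "f \<in> D" using f(1) unfolding HD by simp
      have core: "\<And>A B. matching E A \<Longrightarrow> matching E B \<Longrightarrow> A \<inter> B = {} \<Longrightarrow> A \<union> B = D \<Longrightarrow>
          (\<forall>N1 N2. matching E N1 \<and> matching E N2 \<and> N1 \<inter> N2 = {} \<longrightarrow> card (N1 \<union> N2) \<le> card (A \<union> B))
          \<Longrightarrow> f \<in> A \<Longrightarrow> False"
      proof -
        fix A B assume mA: "matching E A" and mB: "matching E B" and dAB: "A \<inter> B = {}"
          and AB: "A \<union> B = D"
          and mx: "\<forall>N1 N2. matching E N1 \<and> matching E N2 \<and> N1 \<inter> N2 = {} \<longrightarrow> card (N1 \<union> N2) \<le> card (A \<union> B)"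
          and fA: "f \<in> A"
        have AE: "A \<subseteq> E" "B \<subseteq> E" using mA mB unfolding matching_def by auto
        have DE: "D \<subseteq> E" using AE AB by auto
        have bD: "\<And>g. g \<in> D \<Longrightarrow> b \<in> g \<Longrightarrow> g = f"
        proof -
          fix g assume g: "g \<in> D" "b \<in> g"
          then have "g \<noteq> {a,b}" "g \<noteq> {b,c}" using abH unfolding HD by auto
          then show "g = f" using allb[of g] g DE by auto
        qed
        have dBA: "B \<inter> A = {}" using dAB by auto
        have mx': "\<forall>N1 N2. matching E N1 \<and> matching E N2 \<and> N1 \<inter> N2 = {} \<longrightarrow> card (N1 \<union> N2) \<le> card (B \<union> A)"
          using mx by (simp add: Un_commute)
        have tinfo: "\<And>t. {t,b} \<in> H \<Longrightarrow> \<exists>gt\<in>B. t \<in> gt \<and> (\<forall>g\<in>D. t \<in> g \<longrightarrow> g = gt)"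
        proof -
          fix t assume tH: "{t,b} \<in> H"
          have tE: "{t,b} \<in> E" using tH HE by auto
          have tD: "{t,b} \<notin> B" "{t,b} \<notin> A" using tH AB unfolding HD by auto
          obtain gt where gt: "gt \<in> B" "t \<in> gt \<or> b \<in> gt" using cover[OF fin mB mA dBA mx' tE tD] by blast
          have "b \<notin> gt"
          proof
            assume "b \<in> gt"
            then have "gt = f" using bD gt(1) AB by auto
            then show False using gt(1) fA dAB by auto
          qed
          then have tg: "t \<in> gt" using gt by simp
          have "degree E b = 3" by (rule db)
          moreover have "{b,t} \<in> E" using tE by (simp add: insert_commute)
          ultimately have "degree E t \<noteq> 3" using no33 by blast
          moreover have "degree E t \<le> 3" using dle[OF tE, of t] by simp
          ultimately have dt: "\<not> 3 \<le> degree E t" by simp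
          have "\<forall>g\<in>D. t \<in> g \<longrightarrow> g = gt"
          proof (intro ballI impI, rule ccontr)
            fix g assume g: "g \<in> D" "t \<in> g" "g \<noteq> gt"
            have "g \<noteq> {t,b}" "gt \<noteq> {t,b}" using g(1) gt(1) tH AB unfolding HD by auto
            then show False using d3[of g gt "{t,b}" t] g DE gt(1) AE tg tE dt by auto
          qed
          then show "\<exists>gt\<in>B. t \<in> gt \<and> (\<forall>g\<in>D. t \<in> g \<longrightarrow> g = gt)" using gt(1) tg by blast
        qed
        have reach_t: "\<And>t. {t,b} \<in> H \<Longrightarrow> reach D b t"
        proof (rule ccontr)
          fix t assume tH: "{t,b} \<in> H" and nr: "\<not> reach D b t"
          obtain gt where gt: "gt \<in> B" "t \<in> gt" "\<forall>g\<in>D. t \<in> g \<longrightarrow> g = gt" using tinfo[OF tH] by blast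
          have tE: "{t,b} \<in> E" "{t,b} \<notin> A \<union> B" using tH HE AB unfolding HD by auto
          have bM: "\<forall>g\<in>A \<union> B. b \<in> g \<longrightarrow> g \<in> A" using bD fA AB by auto
          have tM: "\<forall>g\<in>A \<union> B. t \<in> g \<longrightarrow> g \<in> B" using gt AB by auto
          have e2: "\<forall>g\<in>E. \<exists>s u. g = {s,u}" using edgeE by blast
          show False by (rule swap_contra[OF fin mA mB dAB mx tE bM tM e2]) (use nr AB in simp)
        qed
        have aH: "{a,b} \<in> H" and cH: "{c,b} \<in> H" using abH by (simp_all add: insert_commute)
        obtain ga where ga: "ga \<in> B" "a \<in> ga" "\<forall>g\<in>D. a \<in> g \<longrightarrow> g = ga" using tinfo[OF aH] by blast
        obtain gc where gc: "gc \<in> B" "c \<in> gc" "\<forall>g\<in>D. c \<in> g \<longrightarrow> g = gc" using tinfo[OF cH] by blast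
        have ra: "reach D b a" using reach_t[OF aH] .
        have rc: "reach D b c" using reach_t[OF cH] .
        have mA': "\<And>e e'. e \<in> A \<Longrightarrow> e' \<in> A \<Longrightarrow> e \<noteq> e' \<Longrightarrow> e \<inter> e' = {}" using mA unfolding matching_def by auto
        have mB': "\<And>e e'. e \<in> B \<Longrightarrow> e' \<in> B \<Longrightarrow> e \<noteq> e' \<Longrightarrow> e \<inter> e' = {}" using mB unfolding matching_def by auto
        show False
        proof (rule three_ends[where r = "\<lambda>x y. \<exists>e\<in>D. e = {x,y}" and a = a and b = b and c = c])
          show "\<forall>x y. (\<exists>e\<in>D. e = {x, y}) \<longrightarrow> (\<exists>e\<in>D. e = {y, x})" by (auto simp: insert_commute)
          show "\<forall>v y z s. (\<exists>e\<in>D. e = {v, y}) \<and> (\<exists>e\<in>D. e = {v, z}) \<and> (\<exists>e\<in>D. e = {v, s}) \<longrightarrow> y = z \<or> y = s \<or> z = s"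
          proof (intro allI impI)
            fix v y z s assume h: "(\<exists>e\<in>D. e = {v, y}) \<and> (\<exists>e\<in>D. e = {v, z}) \<and> (\<exists>e\<in>D. e = {v, s})"
            then have hD: "{v,y} \<in> D" "{v,z} \<in> D" "{v,s} \<in> D" by auto
            show "y = z \<or> y = s \<or> z = s"
            proof (rule ccontr)
              assume "\<not> (y = z \<or> y = s \<or> z = s)"
              then have n: "{v,y} \<noteq> {v,z}" "{v,y} \<noteq> {v,s}" "{v,z} \<noteq> {v,s}" by (auto simp: doubleton_eq_iff)
              have i: "{v,y} \<inter> {v,z} \<noteq> {}" "{v,y} \<inter> {v,s} \<noteq> {}" "{v,z} \<inter> {v,s} \<noteq> {}" by auto
              have "({v,y} \<in> A \<or> {v,y} \<in> B)" "({v,z} \<in> A \<or> {v,z} \<in> B)" "({v,s} \<in> A \<or> {v,s} \<in> B)"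
                using hD AB by auto
              then show False using mA'[OF _ _ n(1)] mA'[OF _ _ n(2)] mA'[OF _ _ n(3)]
                mB'[OF _ _ n(1)] mB'[OF _ _ n(2)] mB'[OF _ _ n(3)] i by blast
            qed
          qed
          show "\<forall>y z. (\<exists>e\<in>D. e = {a, y}) \<longrightarrow> (\<exists>e\<in>D. e = {a, z}) \<longrightarrow> y = z"
            using ga(3) dneq by (metis insertI1)
          show "\<forall>y z. (\<exists>e\<in>D. e = {b, y}) \<longrightarrow> (\<exists>e\<in>D. e = {b, z}) \<longrightarrow> y = z"
            using bD dneq by (metis insertI1)
          show "\<forall>y z. (\<exists>e\<in>D. e = {c, y}) \<longrightarrow> (\<exists>e\<in>D. e = {c, z}) \<longrightarrow> y = z"
            using gc(3) dneq by (metis insertI1)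
          show "(\<lambda>x y. \<exists>e\<in>D. e = {x, y})\<^sup>*\<^sup>* b a" using ra unfolding reach_def .
          show "(\<lambda>x y. \<exists>e\<in>D. e = {x, y})\<^sup>*\<^sup>* b c" using rc unfolding reach_def .
          show "a \<noteq> b" "c \<noteq> b" "a \<noteq> c" using ac by auto
        qed
      qed
      have D': "M2 \<union> M1 = D" unfolding D_def by auto
      show False
      proof (cases "f \<in> M1")
        case True
        then show False using core[OF M1 M2 disj D_def[symmetric] maxi] by blast
      next
        case False
        then have "f \<in> M2" using fD unfolding D_def by auto
        then show False using core[OF M2 M1 disj2 D' maxi2] by blast
      qed
    qed
  qed
  show ?thesis using part1 part2 unfolding H_def by blast
qed

end
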